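(* Let $\alpha\in(0,1)$ be irrational with regular continued fraction $\alpha=\cfrac{1}{a_1+\cfrac{1}{a_2+\cdots}}$ (partial quotients $a_j\in\mathbb{Z}^+$). Then the sequence $(a_j)_{j\ge1}$ is bounded if and only if there is $\delta>0$ with $|\alpha_{k,1}|\ge\delta$ for all $k\ge1$, where $\alpha_{k,1}$ comes from the Minkowski chain of $\alpha$ (case $n=1$).
   Context: Minkowski chain (case $n=1$, $\ell=2$): for $r=(r_1,r_2)\in\mathbb{Z}^2$ put $\xi(r)=r_1\alpha+r_2$. For $m\in\mathbb{Z}^+$, $A_m$ is the nonsingular integral $2\times2$ matrix with rows $w_1,w_2$ chosen successively: $w_1$ is the nonzero $w\in\mathbb{Z}^2$ with $\max(|w_1|,|w_2|)\le m$ minimizing $|\xi(w)|$, and $w_2$ is the $w$ with $\max$-norm $\le m$, linearly independent of $w_1$, minimizing $|\xi(w)|$; each normalized so that its first nonzero entry is positive. The Minkowski chain $B_1,B_2,\dots$ is the sequence of distinct matrices among $A_1,A_2,\dots$ in order of appearance. For $B_k$ let $(\beta_1,\beta_2)^\top=B_k(\alpha,1)^\top$ and $\alpha_{k,1}=\beta_1/\beta_2$. *)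

theory Defs
  imports Complex_Main "HOL-Library.Infinite_Set"
begin

text \<open>Gauss-map remainders: x_0 = alpha, x_(n+1) = frac(1/x_n);
  partial quotients a_j = floor(1/x_(j-1)) for j >= 1, so that
  alpha = 1/(a_1 + 1/(a_2 + ...)).\<close>

fun cf_rem :: "real \<Rightarrow> nat \<Rightarrow> real" where
  "cf_rem \<alpha> 0 = \<alpha>"
| "cf_rem \<alpha> (Suc n) = frac (1 / cf_rem \<alpha> n)"

definition cf_quot :: "real \<Rightarrow> nat \<Rightarrow> int" where
  "cf_quot \<alpha> j = \<lfloor>1 / cf_rem \<alpha> (j - 1)\<rfloor>"

definition xi :: "real \<Rightarrow> int \<times> int \<Rightarrow> real" where
  "xi \<alpha> r = real_of_int (fst r) * \<alpha> + real_of_int (snd r)"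

definition box :: "nat \<Rightarrow> (int \<times> int) set" where
  "box m = {w. \<bar>fst w\<bar> \<le> int m \<and> \<bar>snd w\<bar> \<le> int m}"

definition normalized :: "int \<times> int \<Rightarrow> bool" where
  "normalized w \<longleftrightarrow> fst w > 0 \<or> (fst w = 0 \<and> snd w > 0)"

definition lin_indep2 :: "int \<times> int \<Rightarrow> int \<times> int \<Rightarrow> bool" where
  "lin_indep2 v w \<longleftrightarrow> fst v * snd w - snd v * fst w \<noteq> 0"

definition mink_w1 :: "real \<Rightarrow> nat \<Rightarrow> int \<times> int" where
  "mink_w1 \<alpha> m = (SOME w. w \<in> box m \<and> w \<noteq> (0, 0) \<and> normalized w \<and>
     (\<forall>v \<in> box m. v \<noteq> (0, 0) \<longrightarrow> \<bar>xi \<alpha> w\<bar> \<le> \<bar>xi \<alpha> v\<bar>))"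

definition mink_w2 :: "real \<Rightarrow> nat \<Rightarrow> int \<times> int" where
  "mink_w2 \<alpha> m = (SOME w. w \<in> box m \<and> lin_indep2 (mink_w1 \<alpha> m) w \<and> normalized w \<and>
     (\<forall>v \<in> box m. lin_indep2 (mink_w1 \<alpha> m) v \<longrightarrow> \<bar>xi \<alpha> w\<bar> \<le> \<bar>xi \<alpha> v\<bar>))"

text \<open>The matrix A_m, represented by its pair of rows (w_1, w_2).\<close>
definition mink_A :: "real \<Rightarrow> nat \<Rightarrow> (int \<times> int) \<times> (int \<times> int)" where
  "mink_A \<alpha> m = (mink_w1 \<alpha> m, mink_w2 \<alpha> m)"

definition chain_idx :: "real \<Rightarrow> nat set" where
  "chain_idx \<alpha> = {m. m \<ge> 1 \<and> (\<forall>j \<in> {1..<m}. mink_A \<alpha> j \<noteq> mink_A \<alpha> m)}"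

text \<open>B_k for k >= 1 (B_1 = A_1).\<close>
definition mink_B :: "real \<Rightarrow> nat \<Rightarrow> (int \<times> int) \<times> (int \<times> int)" where
  "mink_B \<alpha> k = mink_A \<alpha> (enumerate (chain_idx \<alpha>) (k - 1))"

text \<open>alpha_(k,1) = beta_1 / beta_2 where (beta_1, beta_2)^T = B_k (alpha, 1)^T.\<close>
definition alpha_k1 :: "real \<Rightarrow> nat \<Rightarrow> real" where
  "alpha_k1 \<alpha> k = xi \<alpha> (fst (mink_B \<alpha> k)) / xi \<alpha> (snd (mink_B \<alpha> k))"

end

theory Submission
  imports Defs
begin

fun qq :: "real \<Rightarrow> nat \<Rightarrow> int" where
  "qq a 0 = 0"
| "qq a (Suc 0) = 1"
| "qq a (Suc (Suc n)) = cf_quot a (Suc n) * qq a (Suc n) + qq a n"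

fun pp :: "real \<Rightarrow> nat \<Rightarrow> int" where
  "pp a 0 = 1"
| "pp a (Suc 0) = 0"
| "pp a (Suc (Suc n)) = cf_quot a (Suc n) * pp a (Suc n) + pp a n"

fun PP :: "real \<Rightarrow> nat \<Rightarrow> real" where
  "PP a 0 = 1"
| "PP a (Suc n) = PP a n * cf_rem a n"

context
  fixes \<alpha> :: real
  assumes a0: "0 < \<alpha>" and a1: "\<alpha> < 1" and airr: "\<alpha> \<notin> \<rat>"
begin

declare cf_rem.simps(2)[simp del]

lemma rem_props: "0 < cf_rem \<alpha> n \<and> cf_rem \<alpha> n < 1 \<and> cf_rem \<alpha> n \<notin> \<rat>"
proof (induction n)
  case 0
  then show ?case using a0 a1 airr by simp
next
  case (Suc n)
  note [simp] = cf_rem.simps(2)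
  let ?x = "cf_rem \<alpha> n"
  have i: "1 / ?x \<notin> \<rat>"
  proof
    assume "1 / ?x \<in> \<rat>"
    then have "1 / (1 / ?x) \<in> \<rat>" by (rule Rats_divide[OF Rats_1])
    then show False using Suc by simp
  qed
  have f: "frac (1 / ?x) = 1 / ?x - of_int \<lfloor>1 / ?x\<rfloor>" by (simp add: frac_def)
  have fi: "frac (1 / ?x) \<notin> \<rat>"
  proof
    assume "frac (1 / ?x) \<in> \<rat>"
    then have "frac (1 / ?x) + of_int \<lfloor>1 / ?x\<rfloor> \<in> \<rat>" by (simp add: Rats_add)
    then show False using i f by simp
  qed
  have "frac (1 / ?x) \<noteq> 0" using i by (auto simp: frac_eq_0_iff elim!: Ints_cases)
  then have "0 < frac (1 / ?x)" using frac_ge_0[of "1/?x"] by linarith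
  then show ?case using fi frac_lt_1 by simp
qed

lemma rem_pos: "0 < cf_rem \<alpha> n" and rem_lt1: "cf_rem \<alpha> n < 1"
  using rem_props by auto

lemma quot_Suc: "cf_quot \<alpha> (Suc n) = \<lfloor>1 / cf_rem \<alpha> n\<rfloor>"
  by (simp add: cf_quot_def)

lemma rem_Suc: "cf_rem \<alpha> (Suc n) = 1 / cf_rem \<alpha> n - cf_quot \<alpha> (Suc n)"
  by (simp add: quot_Suc frac_def cf_rem.simps(2))

lemma quot_ge1: "cf_quot \<alpha> (Suc n) \<ge> 1"
proof -
  have "1 / cf_rem \<alpha> n > 1" using rem_pos[of n] rem_lt1[of n] by simp
  then show ?thesis unfolding quot_Suc by linarith
qed

lemma rem_lower: "1 / (cf_quot \<alpha> (Suc n) + 1) < cf_rem \<alpha> n"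
proof -
  have x: "0 < cf_rem \<alpha> n" by (rule rem_pos)
  have "1 / cf_rem \<alpha> n < cf_quot \<alpha> (Suc n) + 1" unfolding quot_Suc by linarith
  then show ?thesis using x quot_ge1[of n]
    by (simp add: field_simps)
qed

lemma qq_nonneg: "qq \<alpha> n \<ge> 0 \<and> qq \<alpha> (Suc n) \<ge> 1"
proof (induction n)
  case 0 then show ?case by simp
next
  case (Suc n)
  have "cf_quot \<alpha> (Suc n) * qq \<alpha> (Suc n) \<ge> 1"
    using quot_ge1[of n] Suc mult_mono[of 1 "cf_quot \<alpha> (Suc n)" 1 "qq \<alpha> (Suc n)"] by simp
  then show ?case using Suc by simp
qed

lemma qq_Suc_ge: "qq \<alpha> (Suc (Suc n)) \<ge> qq \<alpha> (Suc n) + qq \<alpha> n"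
proof -
  have "cf_quot \<alpha> (Suc n) * qq \<alpha> (Suc n) \<ge> qq \<alpha> (Suc n)"
    using quot_ge1[of n] qq_nonneg[of n] by (simp add: mult_le_cancel_right1)
  then show ?thesis by simp
qed

lemma qq_mono1: "qq \<alpha> n \<le> qq \<alpha> (Suc n)"
proof (cases n)
  case 0 then show ?thesis by simp
next
  case (Suc m) then show ?thesis using qq_Suc_ge[of m] qq_nonneg[of m] by (simp del: qq.simps)
qed

lemma qq_lin: "qq \<alpha> (Suc n) \<ge> int n"
proof (induction n)
  case 0 then show ?case by simp
next
  case (Suc n)
  show ?case
  proof (cases n)
    case 0 then show ?thesis using qq_Suc_ge[of 0] by simp
  next
    case (Suc m)
    then have "qq \<alpha> n \<ge> 1" using qq_nonneg[of m] by simp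
    then show ?thesis using qq_Suc_ge[of n] Suc.IH by simp
  qed
qed

lemma PP_pos: "PP \<alpha> n > 0"
  by (induction n) (auto simp: rem_pos)

lemma PP_dec: "PP \<alpha> (Suc n) \<le> PP \<alpha> n"
  using PP_pos[of n] rem_lt1[of n] by (simp add: mult_le_cancel_left1)

lemma PP_rec: "PP \<alpha> (Suc (Suc n)) = PP \<alpha> n - cf_quot \<alpha> (Suc n) * PP \<alpha> (Suc n)"
proof -
  have x: "cf_rem \<alpha> n \<noteq> 0" using rem_pos[of n] by simp
  show ?thesis using x by (simp add: rem_Suc field_simps)
qed

lemma ident: "qq \<alpha> (Suc k) * PP \<alpha> k + qq \<alpha> k * PP \<alpha> (Suc k) = 1"
proof -
  have "qq \<alpha> (Suc k) * PP \<alpha> k + qq \<alpha> k * PP \<alpha> (Suc k) = 1 \<and>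
        qq \<alpha> (Suc (Suc k)) * PP \<alpha> (Suc k) + qq \<alpha> (Suc k) * PP \<alpha> (Suc (Suc k)) = 1"
  proof (induction k)
    case 0
    show ?case using PP_rec[of 0] by (simp add: algebra_simps)
  next
    case (Suc k)
    have "qq \<alpha> (Suc (Suc (Suc k))) * PP \<alpha> (Suc (Suc k)) + qq \<alpha> (Suc (Suc k)) * PP \<alpha> (Suc (Suc (Suc k)))
      = qq \<alpha> (Suc (Suc k)) * PP \<alpha> (Suc k) + qq \<alpha> (Suc k) * PP \<alpha> (Suc (Suc k))"
      by (simp only: PP_rec[of "Suc k"] qq.simps of_int_add of_int_mult) (simp add: algebra_simps)
    then show ?case using Suc by simp
  qed
  then show ?thesis by simp
qed

lemma sign: "qq \<alpha> k * \<alpha> - pp \<alpha> k = (-1) ^ Suc k * PP \<alpha> k"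
proof -
  have "qq \<alpha> k * \<alpha> - pp \<alpha> k = (-1) ^ Suc k * PP \<alpha> k \<and>
        qq \<alpha> (Suc k) * \<alpha> - pp \<alpha> (Suc k) = (-1) ^ Suc (Suc k) * PP \<alpha> (Suc k)"
  proof (induction k)
    case 0 then show ?case by simp
  next
    case (Suc k)
    have "qq \<alpha> (Suc (Suc k)) * \<alpha> - pp \<alpha> (Suc (Suc k)) =
       cf_quot \<alpha> (Suc k) * (qq \<alpha> (Suc k) * \<alpha> - pp \<alpha> (Suc k)) + (qq \<alpha> k * \<alpha> - pp \<alpha> k)"
      by (simp add: algebra_simps)
    also have "\<dots> = (-1) ^ Suc (Suc (Suc k)) * PP \<alpha> (Suc (Suc k))"
      using Suc by (simp del: PP.simps add: PP_rec[of k] algebra_simps)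
    finally show ?case using Suc by simp
  qed
  then show ?thesis by simp
qed

lemma abs_xi: "\<bar>qq \<alpha> k * \<alpha> - pp \<alpha> k\<bar> = PP \<alpha> k"
  using sign[of k] PP_pos[of k] by (simp add: abs_mult)

lemma bracket:
  assumes "q \<ge> 1"
  shows "\<exists>k\<ge>1. qq \<alpha> k \<le> q \<and> q < qq \<alpha> (Suc k)"
proof -
  have ex: "q < qq \<alpha> (Suc (nat q + 1))" using qq_lin[of "nat q + 1"] assms by simp
  define K where "K = (LEAST k. q < qq \<alpha> k)"
  have K: "q < qq \<alpha> K" unfolding K_def by (rule LeastI[of "\<lambda>k. q < qq \<alpha> k", OF ex])
  have K0: "K \<noteq> 0"
  proof
    assume "K = 0" then show False using K assms by simp
  qed
  have K1: "K \<noteq> 1"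
  proof
    assume "K = 1" then show False using K assms by simp
  qed
  obtain k where kK: "K = Suc k" using K0 by (cases K) auto
  have "k \<ge> 1" using K0 K1 kK by simp
  moreover have "\<not> q < qq \<alpha> k" unfolding K_def
    using not_less_Least[of k "\<lambda>k. q < qq \<alpha> k"] kK K_def by simp
  ultimately show ?thesis using K kK by auto
qed

lemma qP_lower:
  assumes "k \<ge> 1"
  shows "1 \<le> (cf_quot \<alpha> k + 2) * (qq \<alpha> k * PP \<alpha> k)"
proof -
  obtain n where kn: "k = Suc n" using assms by (cases k) auto
  have i: "qq \<alpha> (Suc k) * PP \<alpha> k + qq \<alpha> k * PP \<alpha> (Suc k) = 1" by (rule ident)
  have q1: "qq \<alpha> (Suc k) \<le> (cf_quot \<alpha> k + 1) * qq \<alpha> k"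
    using qq_mono1[of n] kn by (simp add: algebra_simps)
  have q1': "real_of_int (qq \<alpha> (Suc k)) \<le> (cf_quot \<alpha> k + 1) * qq \<alpha> k"
    using q1 by (metis of_int_add of_int_le_iff of_int_mult of_int_1)
  have "qq \<alpha> (Suc k) * PP \<alpha> k \<le> ((cf_quot \<alpha> k + 1) * qq \<alpha> k) * PP \<alpha> k"
    using q1' PP_pos[of k] by (simp add: mult_right_mono)
  moreover have "qq \<alpha> k * PP \<alpha> (Suc k) \<le> qq \<alpha> k * PP \<alpha> k"
    using PP_dec[of k] qq_nonneg[of k] by (simp add: mult_left_mono)
  ultimately show ?thesis using i by (simp add: algebra_simps)
qed

lemma approx_lower:
  fixes q p :: int
  assumes k: "k \<ge> 1" and lo: "qq \<alpha> k \<le> q" and hi: "q < qq \<alpha> (Suc k)"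
  shows "PP \<alpha> (Suc k) \<le> \<bar>q * \<alpha> + p\<bar>"
proof -
  define Q where "Q = qq \<alpha> k"
  define P where "P = PP \<alpha> k"
  have Q1: "Q \<ge> 1" using qq_nonneg[of "k - 1"] k unfolding Q_def by (cases k) auto
  have P0: "P > 0" unfolding P_def by (rule PP_pos)
  have xk: "Q * \<alpha> - pp \<alpha> k = (-1) ^ Suc k * P" unfolding Q_def P_def by (rule sign)
  have aP: "\<bar>Q * \<alpha> - pp \<alpha> k\<bar> = P" unfolding Q_def P_def by (rule abs_xi)
  define D where "D = Q * p + q * pp \<alpha> k"
  have DE: "Q * (q * \<alpha> + p) - q * (Q * \<alpha> - pp \<alpha> k) = D"
    unfolding D_def by (simp add: algebra_simps)
  have i: "qq \<alpha> (Suc k) * P + Q * PP \<alpha> (Suc k) = 1" unfolding Q_def P_def by (rule ident)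
  have PS: "PP \<alpha> (Suc k) \<le> P" unfolding P_def by (rule PP_dec)
  show ?thesis
  proof (cases "D = 0")
    case True
    then have "Q * (q * \<alpha> + p) = q * (Q * \<alpha> - pp \<alpha> k)" using DE by simp
    then have "\<bar>Q * (q * \<alpha> + p)\<bar> = \<bar>q * (Q * \<alpha> - pp \<alpha> k)\<bar>" by simp
    moreover have "0 \<le> real_of_int Q" "0 \<le> real_of_int q" using Q1 lo Q_def by simp_all
    ultimately have "Q * \<bar>q * \<alpha> + p\<bar> = q * P" using aP by (simp add: abs_mult)
    moreover have "Q * P \<le> q * P" using lo P0 Q_def by simp
    ultimately have "Q * P \<le> Q * \<bar>q * \<alpha> + p\<bar>" by simp
    then have "P \<le> \<bar>q * \<alpha> + p\<bar>" using Q1 by simp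
    then show ?thesis using PS by simp
  next
    case False
    then have D1: "1 \<le> \<bar>real_of_int D\<bar>" by linarith
    have "\<bar>real_of_int D\<bar> \<le> Q * \<bar>q * \<alpha> + p\<bar> + q * P"
    proof -
      have "\<bar>real_of_int D\<bar> \<le> \<bar>Q * (q * \<alpha> + p)\<bar> + \<bar>q * (Q * \<alpha> - pp \<alpha> k)\<bar>"
        using DE[symmetric] by (metis abs_triangle_ineq4)
      also have "\<dots> = Q * \<bar>q * \<alpha> + p\<bar> + q * P"
        using aP Q1 lo Q_def by (simp add: abs_mult)
      finally show ?thesis .
    qed
    moreover have "q * P \<le> qq \<alpha> (Suc k) * P" using hi P0 by simp
    ultimately have "Q * PP \<alpha> (Suc k) \<le> Q * \<bar>q * \<alpha> + p\<bar>" using D1 i by linarith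
    then show ?thesis using Q1 by simp
  qed
qed

lemma badly:
  assumes C: "\<forall>j\<ge>1. \<bar>cf_quot \<alpha> j\<bar> \<le> C"
  shows "\<exists>c>0. \<forall>q::int. \<forall>p::int. q \<ge> (1::int) \<longrightarrow> c \<le> q * \<bar>q * \<alpha> + p\<bar>"
proof -
  have C1: "C \<ge> 1" using C quot_ge1[of 0] by force
  define c :: real where "c = 1 / ((C + 2) * (C + 1))"
  have "c > 0" using C1 unfolding c_def by simp
  moreover have "c \<le> q * \<bar>q * \<alpha> + p\<bar>" if q: "q \<ge> 1" for q p :: int
  proof -
    obtain k where k: "k \<ge> 1" "qq \<alpha> k \<le> q" "q < qq \<alpha> (Suc k)" using bracket[OF q] by auto
    have Q1: "qq \<alpha> k \<ge> 1" using qq_nonneg[of "k - 1"] k by (cases k) auto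
    define a where "a = cf_quot \<alpha> k"
    define b where "b = cf_quot \<alpha> (Suc k)"
    have "k = Suc (k - 1)" using k by simp
    then have a: "1 \<le> a" "a \<le> C" using C k(1) quot_ge1[of "k - 1"] unfolding a_def by (metis abs_of_pos order_less_le_trans zero_less_one)+
    have "\<bar>cf_quot \<alpha> (Suc k)\<bar> \<le> C" using C by simp
    then have b: "1 \<le> b" "b \<le> C" using quot_ge1[of k] unfolding b_def by simp_all
    have l1: "1 \<le> (a + 2) * (qq \<alpha> k * PP \<alpha> k)" unfolding a_def using qP_lower[OF k(1)] by simp
    have l2: "1 / (b + 1) < cf_rem \<alpha> k" unfolding b_def by (rule rem_lower)
    have l3: "PP \<alpha> (Suc k) \<le> \<bar>q * \<alpha> + p\<bar>" by (rule approx_lower[OF k])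
    have "qq \<alpha> k * PP \<alpha> k * (1 / (b+1)) \<le> qq \<alpha> k * PP \<alpha> k * cf_rem \<alpha> k"
      using l2 PP_pos[of k] Q1 by (intro mult_left_mono) auto
    also have "\<dots> = qq \<alpha> k * PP \<alpha> (Suc k)" by simp
    also have "\<dots> \<le> q * PP \<alpha> (Suc k)" using k(2) PP_pos[of "Suc k"] by (intro mult_right_mono) auto
    also have "\<dots> \<le> q * \<bar>q * \<alpha> + p\<bar>" using l3 q by (intro mult_left_mono) auto
    finally have m: "qq \<alpha> k * PP \<alpha> k / (b+1) \<le> q * \<bar>q * \<alpha> + p\<bar>" by simp
    have pa: "real_of_int a + 2 > 0" using a by simp
    have "1 / (a + 2) \<le> qq \<alpha> k * PP \<alpha> k"
      using l1 pa by (simp add: divide_le_eq mult.commute)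
    then have "(1 / (a + 2)) / (b + 1) \<le> qq \<alpha> k * PP \<alpha> k / (b+1)"
      using b by (intro divide_right_mono) auto
    then have "1 / ((a + 2) * (b + 1)) \<le> qq \<alpha> k * PP \<alpha> k / (b+1)" by simp
    moreover have "c \<le> 1 / ((a + 2) * (b + 1))"
    proof -
      have "(real_of_int a + 2) * (real_of_int b + 1) \<le> (real_of_int C + 2) * (real_of_int C + 1)"
        by (rule mult_mono) (use a b in auto)
      then show ?thesis unfolding c_def using a b
        by (intro divide_left_mono) auto
    qed
    ultimately show ?thesis using m by linarith
  qed
  ultimately show ?thesis by blast
qed

lemma not_badly:
  assumes k: "k \<ge> 1"
  shows "cf_quot \<alpha> k * (qq \<alpha> k * PP \<alpha> k) \<le> 1"
proof -
  obtain n where kn: "k = Suc n" using k by (cases k) auto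
  have i: "qq \<alpha> (Suc k) * PP \<alpha> k + qq \<alpha> k * PP \<alpha> (Suc k) = 1" by (rule ident)
  have "cf_quot \<alpha> k * qq \<alpha> k \<le> qq \<alpha> (Suc k)" using qq_nonneg[of n] kn by simp
  then have "real_of_int (cf_quot \<alpha> k * qq \<alpha> k) \<le> real_of_int (qq \<alpha> (Suc k))"
    by (simp only: of_int_le_iff)
  then have "real_of_int (cf_quot \<alpha> k * qq \<alpha> k) * PP \<alpha> k \<le> qq \<alpha> (Suc k) * PP \<alpha> k"
    using PP_pos[of k] by (intro mult_right_mono) auto
  moreover have "0 \<le> qq \<alpha> k * PP \<alpha> (Suc k)" using qq_nonneg[of k] PP_pos[of "Suc k"] by simp
  ultimately show ?thesis using i by (simp add: algebra_simps)
qed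

lemma pp_bounds:
  assumes "k \<ge> 1"
  shows "0 \<le> pp \<alpha> k \<and> pp \<alpha> k \<le> qq \<alpha> k"
proof -
  have Q1: "qq \<alpha> k \<ge> 1" using qq_nonneg[of "k - 1"] assms by (cases k) auto
  have P1: "PP \<alpha> k < 1"
  proof -
    obtain n where "k = Suc n" using assms by (cases k) auto
    moreover have "PP \<alpha> n * cf_rem \<alpha> n < 1 * 1"
    proof -
      have "PP \<alpha> n \<le> 1"
      proof (induction n)
        case (Suc n) then show ?case using PP_dec[of n] by linarith
      qed simp
      then show ?thesis using rem_lt1[of n] rem_pos[of n] PP_pos[of n]
        by (intro mult_le_less_imp_less) auto
    qed
    ultimately show ?thesis by simp
  qed
  have "\<bar>qq \<alpha> k * \<alpha> - pp \<alpha> k\<bar> < 1" using abs_xi[of k] P1 by simp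
  moreover have "qq \<alpha> k * \<alpha> < qq \<alpha> k" using Q1 a1 by simp
  moreover have "qq \<alpha> k * \<alpha> > 0" using Q1 a0 by simp
  ultimately have "real_of_int (pp \<alpha> k) > -1" "real_of_int (pp \<alpha> k) < qq \<alpha> k + 1"
    by (auto simp add: abs_less_iff)
  then show ?thesis by linarith
qed

lemma dirichlet:
  assumes m: "m \<ge> 1"
  shows "\<exists>w \<in> box m. w \<noteq> (0,0) \<and> \<bar>xi \<alpha> w\<bar> \<le> 1 / (m + 1)"
proof -
  obtain k where k: "k \<ge> 1" "qq \<alpha> k \<le> int m" "int m < qq \<alpha> (Suc k)" using bracket[of "int m"] m by auto
  have Q1: "qq \<alpha> k \<ge> 1" using qq_nonneg[of "k - 1"] k by (cases k) auto
  define w where "w = (qq \<alpha> k, - pp \<alpha> k)"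
  have pb: "0 \<le> pp \<alpha> k" "pp \<alpha> k \<le> qq \<alpha> k" using pp_bounds[OF k(1)] by auto
  have "\<bar>qq \<alpha> k\<bar> \<le> int m" "\<bar>- pp \<alpha> k\<bar> \<le> int m" using pb k(2) Q1 by linarith+
  then have "w \<in> box m" unfolding w_def box_def by simp
  moreover have "w \<noteq> (0,0)" using Q1 unfolding w_def by auto
  moreover have "\<bar>xi \<alpha> w\<bar> \<le> 1 / (m + 1)"
  proof -
    have e: "\<bar>xi \<alpha> w\<bar> = PP \<alpha> k" using abs_xi[of k] unfolding w_def xi_def by (simp add: algebra_simps)
    have i: "qq \<alpha> (Suc k) * PP \<alpha> k + qq \<alpha> k * PP \<alpha> (Suc k) = 1" by (rule ident)
    have "0 \<le> qq \<alpha> k * PP \<alpha> (Suc k)" using qq_nonneg[of k] PP_pos[of "Suc k"] by simp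
    then have "qq \<alpha> (Suc k) * PP \<alpha> k \<le> 1" using i by linarith
    moreover have "real m + 1 \<le> qq \<alpha> (Suc k)" using k(3) by linarith
    moreover have "(real m + 1) * PP \<alpha> k \<le> qq \<alpha> (Suc k) * PP \<alpha> k"
      using PP_pos[of k] \<open>real m + 1 \<le> qq \<alpha> (Suc k)\<close> by (intro mult_right_mono) auto
    ultimately have "(real m + 1) * PP \<alpha> k \<le> 1" by linarith
    then show ?thesis using e by (simp add: field_simps)
  qed
  ultimately show ?thesis by (intro bexI[of _ w]) (simp_all add: add.commute)
qed

lemma xi_nz:
  assumes "w \<noteq> (0,0)"
  shows "xi \<alpha> w \<noteq> 0"
proof
  assume h: "xi \<alpha> w = 0"
  obtain a b where w: "w = (a, b)" by (cases w)
  show False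
  proof (cases "a = 0")
    case True then show False using h w assms by (simp add: xi_def)
  next
    case False
    then have "\<alpha> = - of_int b / of_int a" using h w by (simp add: xi_def field_simps)
    then have "\<alpha> \<in> \<rat>" by simp
    then show False using airr by simp
  qed
qed

lemma box_finite: "finite (box m)"
proof -
  have "box m \<subseteq> {- int m..int m} \<times> {- int m..int m}" unfolding box_def by auto
  then show ?thesis by (rule finite_subset) simp
qed

lemma ex_min_on:
  fixes f :: "int \<times> int \<Rightarrow> real"
  assumes "finite S" "S \<noteq> {}"
  shows "\<exists>w\<in>S. \<forall>v\<in>S. f w \<le> f v"
proof -
  have "Min (f ` S) \<in> f ` S" using assms by simp
  then obtain w where "w \<in> S" "f w = Min (f ` S)" by auto
  moreover have "\<forall>v\<in>S. Min (f ` S) \<le> f v" using assms by simp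
  ultimately show ?thesis by metis
qed

lemma norm_neg:
  assumes "w \<noteq> (0,0)" "\<not> normalized w"
  shows "normalized (- fst w, - snd w)"
  using assms unfolding normalized_def by (cases w) auto

lemma box_neg: "w \<in> box m \<Longrightarrow> (- fst w, - snd w) \<in> box m"
  unfolding box_def by auto

lemma xi_neg: "xi \<alpha> (- fst w, - snd w) = - xi \<alpha> w"
  unfolding xi_def by simp

lemma w1_spec:
  assumes m: "m \<ge> 1"
  shows "mink_w1 \<alpha> m \<in> box m \<and> mink_w1 \<alpha> m \<noteq> (0, 0) \<and> normalized (mink_w1 \<alpha> m) \<and>
     (\<forall>v \<in> box m. v \<noteq> (0, 0) \<longrightarrow> \<bar>xi \<alpha> (mink_w1 \<alpha> m)\<bar> \<le> \<bar>xi \<alpha> v\<bar>)"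
proof -
  let ?S = "box m - {(0,0)}"
  have "(1,0) \<in> ?S" using m unfolding box_def by auto
  then obtain w where w: "w \<in> ?S" "\<forall>v\<in>?S. \<bar>xi \<alpha> w\<bar> \<le> \<bar>xi \<alpha> v\<bar>"
    using ex_min_on[of ?S "\<lambda>w. \<bar>xi \<alpha> w\<bar>"] box_finite[of m] by blast
  have "\<exists>w. w \<in> box m \<and> w \<noteq> (0, 0) \<and> normalized w \<and>
     (\<forall>v \<in> box m. v \<noteq> (0, 0) \<longrightarrow> \<bar>xi \<alpha> w\<bar> \<le> \<bar>xi \<alpha> v\<bar>)"
  proof (cases "normalized w")
    case True then show ?thesis using w by blast
  next
    case False
    let ?w = "(- fst w, - snd w)"
    have "?w \<in> box m" using w box_neg by auto
    moreover have "?w \<noteq> (0,0)" using w by (cases w) auto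
    moreover have "normalized ?w" using norm_neg False w by auto
    moreover have "\<forall>v \<in> box m. v \<noteq> (0, 0) \<longrightarrow> \<bar>xi \<alpha> ?w\<bar> \<le> \<bar>xi \<alpha> v\<bar>"
      using w xi_neg[of w] by simp
    ultimately show ?thesis by blast
  qed
  then show ?thesis unfolding mink_w1_def by (rule someI_ex)
qed

lemma lin_indep_neg: "lin_indep2 u (- fst w, - snd w) = lin_indep2 u w"
  unfolding lin_indep2_def by (auto simp: algebra_simps)

lemma lin_indep_nz: "lin_indep2 u w \<Longrightarrow> w \<noteq> (0,0)"
  unfolding lin_indep2_def by auto

lemma w2_spec:
  assumes ex: "\<exists>v\<in>box m. lin_indep2 (mink_w1 \<alpha> m) v"
  shows "mink_w2 \<alpha> m \<in> box m \<and> lin_indep2 (mink_w1 \<alpha> m) (mink_w2 \<alpha> m) \<and>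
     (\<forall>v \<in> box m. lin_indep2 (mink_w1 \<alpha> m) v \<longrightarrow> \<bar>xi \<alpha> (mink_w2 \<alpha> m)\<bar> \<le> \<bar>xi \<alpha> v\<bar>)"
proof -
  let ?u = "mink_w1 \<alpha> m"
  let ?S = "{v \<in> box m. lin_indep2 ?u v}"
  have fin: "finite ?S" using box_finite[of m] by simp
  have ne: "?S \<noteq> {}" using ex by blast
  obtain w where w: "w \<in> ?S" "\<forall>v\<in>?S. \<bar>xi \<alpha> w\<bar> \<le> \<bar>xi \<alpha> v\<bar>"
    using ex_min_on[OF fin ne, of "\<lambda>w. \<bar>xi \<alpha> w\<bar>"] by blast
  have "\<exists>w. w \<in> box m \<and> lin_indep2 ?u w \<and> normalized w \<and>
     (\<forall>v \<in> box m. lin_indep2 ?u v \<longrightarrow> \<bar>xi \<alpha> w\<bar> \<le> \<bar>xi \<alpha> v\<bar>)"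
  proof (cases "normalized w")
    case True then show ?thesis using w by blast
  next
    case False
    let ?w = "(- fst w, - snd w)"
    have "?w \<in> box m" using w box_neg by auto
    moreover have "lin_indep2 ?u ?w" using w lin_indep_neg by auto
    moreover have "normalized ?w" using norm_neg[OF _ False] lin_indep_nz w(1) by blast
    moreover have "\<forall>v \<in> box m. lin_indep2 ?u v \<longrightarrow> \<bar>xi \<alpha> ?w\<bar> \<le> \<bar>xi \<alpha> v\<bar>"
    proof (intro ballI impI)
      fix v assume "v \<in> box m" "lin_indep2 ?u v"
      then have "v \<in> ?S" by simp
      then have "\<bar>xi \<alpha> w\<bar> \<le> \<bar>xi \<alpha> v\<bar>" using w(2) by blast
      then show "\<bar>xi \<alpha> ?w\<bar> \<le> \<bar>xi \<alpha> v\<bar>" using xi_neg[of w] by simp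
    qed
    ultimately show ?thesis by blast
  qed
  then have "mink_w2 \<alpha> m \<in> box m \<and> lin_indep2 ?u (mink_w2 \<alpha> m) \<and> normalized (mink_w2 \<alpha> m) \<and>
     (\<forall>v \<in> box m. lin_indep2 ?u v \<longrightarrow> \<bar>xi \<alpha> (mink_w2 \<alpha> m)\<bar> \<le> \<bar>xi \<alpha> v\<bar>)"
    unfolding mink_w2_def by (rule someI_ex)
  then show ?thesis by blast
qed

lemma w1_small:
  assumes m: "m \<ge> 1"
  shows "\<bar>xi \<alpha> (mink_w1 \<alpha> m)\<bar> \<le> 1 / (real m + 1)"
proof -
  from dirichlet[OF m] obtain w where w0: "w \<in> box m" and w1: "w \<noteq> (0,0) \<and> \<bar>xi \<alpha> w\<bar> \<le> 1 / (real m + 1)" ..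
  have w: "w \<in> box m" "w \<noteq> (0,0)" "\<bar>xi \<alpha> w\<bar> \<le> 1 / (real m + 1)" using w0 w1 by simp_all
  have sp4: "\<forall>v \<in> box m. v \<noteq> (0, 0) \<longrightarrow> \<bar>xi \<alpha> (mink_w1 \<alpha> m)\<bar> \<le> \<bar>xi \<alpha> v\<bar>"
    using w1_spec[OF m] by (rule conjunct2[OF conjunct2[OF conjunct2]])
  have "\<bar>xi \<alpha> (mink_w1 \<alpha> m)\<bar> \<le> \<bar>xi \<alpha> w\<bar>" using sp4 w(1,2) by blast
  then show ?thesis using w(3) by linarith
qed

lemma w1_facts:
  assumes m: "m \<ge> 1"
  defines "q1 \<equiv> fst (mink_w1 \<alpha> m)" and "p1 \<equiv> snd (mink_w1 \<alpha> m)"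
  shows "1 \<le> q1" "q1 \<le> int m" "\<bar>p1\<bar> \<le> int m" "0 < \<bar>xi \<alpha> (mink_w1 \<alpha> m)\<bar>"
    "xi \<alpha> (mink_w1 \<alpha> m) = q1 * \<alpha> + p1" "gcd q1 p1 = 1"
proof -
  let ?w = "mink_w1 \<alpha> m"
  have sp: "?w \<in> box m" "?w \<noteq> (0,0)" "normalized ?w"
    "\<forall>v \<in> box m. v \<noteq> (0, 0) \<longrightarrow> \<bar>xi \<alpha> ?w\<bar> \<le> \<bar>xi \<alpha> v\<bar>" using w1_spec[OF m] by auto
  have sm: "\<bar>xi \<alpha> ?w\<bar> \<le> 1 / (real m + 1)" by (rule w1_small[OF m])
  have "1 / (real m + 1) < 1" using m by simp
  then have sm1: "\<bar>xi \<alpha> ?w\<bar> < 1" using sm by linarith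
  show xe: "xi \<alpha> ?w = q1 * \<alpha> + p1" unfolding q1_def p1_def xi_def by simp
  show pos: "0 < \<bar>xi \<alpha> ?w\<bar>" using xi_nz sp by simp
  show "q1 \<le> int m" "\<bar>p1\<bar> \<le> int m" using sp(1) unfolding q1_def p1_def box_def by auto
  show q1: "1 \<le> q1"
  proof (rule ccontr)
    assume "\<not> 1 \<le> q1"
    then have "q1 = 0" "p1 > 0" using sp(3) unfolding normalized_def q1_def p1_def by auto
    then have "\<bar>xi \<alpha> ?w\<bar> \<ge> 1" using xe by simp
    then show False using sm1 by simp
  qed
  show "gcd q1 p1 = 1"
  proof (rule ccontr)
    assume ne: "gcd q1 p1 \<noteq> 1"
    define g where "g = gcd q1 p1"
    have "g \<ge> 0" "g \<noteq> 0" using q1 unfolding g_def by auto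
    then have g2: "g \<ge> 2" using ne unfolding g_def by linarith
    obtain a where a: "q1 = g * a" unfolding g_def by (meson gcd_dvd1 dvdE)
    obtain b where b: "p1 = g * b" unfolding g_def by (meson gcd_dvd2 dvdE)
    have "0 < g * a" using a q1 by simp
    then have a1: "a \<ge> 1" using g2 by (simp add: zero_less_mult_iff)
    have "\<bar>a\<bar> \<le> int m" "\<bar>b\<bar> \<le> int m"
    proof -
      have "\<bar>a\<bar> \<le> \<bar>q1\<bar>" "\<bar>b\<bar> \<le> \<bar>p1\<bar>" using a b g2 by (simp_all add: abs_mult mult_le_cancel_right1)
      then show "\<bar>a\<bar> \<le> int m" "\<bar>b\<bar> \<le> int m" using \<open>q1 \<le> int m\<close> \<open>\<bar>p1\<bar> \<le> int m\<close> q1 by auto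
    qed
    then have inb: "(a, b) \<in> box m" unfolding box_def by simp
    have nz: "(a, b) \<noteq> (0,0)" using a1 by simp
    have "xi \<alpha> ?w = g * xi \<alpha> (a, b)" using xe a b unfolding xi_def by (simp add: algebra_simps)
    then have e: "\<bar>xi \<alpha> ?w\<bar> = g * \<bar>xi \<alpha> (a, b)\<bar>" using g2 by (simp add: abs_mult)
    have "\<bar>xi \<alpha> ?w\<bar> \<le> \<bar>xi \<alpha> (a, b)\<bar>" using sp(4) inb nz by blast
    moreover have "\<bar>xi \<alpha> (a, b)\<bar> > 0" using xi_nz[OF nz] by simp
    moreover have "real_of_int g * \<bar>xi \<alpha> (a, b)\<bar> \<ge> 2 * \<bar>xi \<alpha> (a, b)\<bar>"
      using g2 by (intro mult_right_mono) auto
    ultimately show False using e by linarith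
  qed
qed

lemma indep_exists:
  assumes m: "m \<ge> 1"
  shows "(0, 1) \<in> box m \<and> lin_indep2 (mink_w1 \<alpha> m) (0, 1)"
proof -
  have "1 \<le> fst (mink_w1 \<alpha> m)" using w1_facts(1)[OF m] by simp
  then show ?thesis using m unfolding box_def lin_indep2_def by simp
qed

lemma w2_facts:
  assumes m: "m \<ge> 1"
  shows "mink_w2 \<alpha> m \<in> box m" "lin_indep2 (mink_w1 \<alpha> m) (mink_w2 \<alpha> m)"
    "\<And>v. v \<in> box m \<Longrightarrow> lin_indep2 (mink_w1 \<alpha> m) v \<Longrightarrow> \<bar>xi \<alpha> (mink_w2 \<alpha> m)\<bar> \<le> \<bar>xi \<alpha> v\<bar>"
proof -
  have ex: "\<exists>v\<in>box m. lin_indep2 (mink_w1 \<alpha> m) v" using indep_exists[OF m] by blast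
  note sp = w2_spec[OF ex]
  show "mink_w2 \<alpha> m \<in> box m" "lin_indep2 (mink_w1 \<alpha> m) (mink_w2 \<alpha> m)" using sp by simp_all
  fix v assume "v \<in> box m" "lin_indep2 (mink_w1 \<alpha> m) v"
  then show "\<bar>xi \<alpha> (mink_w2 \<alpha> m)\<bar> \<le> \<bar>xi \<alpha> v\<bar>" using sp by simp
qed

lemma ratio_upper:
  assumes m: "m \<ge> 1" and small: "real m * \<bar>xi \<alpha> (mink_w1 \<alpha> m)\<bar> < 1"
  shows "\<bar>xi \<alpha> (mink_w1 \<alpha> m) / xi \<alpha> (mink_w2 \<alpha> m)\<bar>
          \<le> real m * \<bar>xi \<alpha> (mink_w1 \<alpha> m)\<bar> / (1 - real m * \<bar>xi \<alpha> (mink_w1 \<alpha> m)\<bar>)"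
proof -
  define q1 where "q1 = fst (mink_w1 \<alpha> m)"
  define p1 where "p1 = snd (mink_w1 \<alpha> m)"
  define q2 where "q2 = fst (mink_w2 \<alpha> m)"
  define p2 where "p2 = snd (mink_w2 \<alpha> m)"
  define e1 where "e1 = \<bar>xi \<alpha> (mink_w1 \<alpha> m)\<bar>"
  define X where "X = \<bar>xi \<alpha> (mink_w2 \<alpha> m)\<bar>"
  have q1: "1 \<le> q1" "q1 \<le> int m" using w1_facts[OF m] unfolding q1_def by auto
  have e1: "0 < e1" using w1_facts(4)[OF m] unfolding e1_def .
  have q2: "\<bar>q2\<bar> \<le> int m" using w2_facts(1)[OF m] unfolding q2_def box_def by auto
  have d: "q1 * p2 - p1 * q2 \<noteq> 0" using w2_facts(2)[OF m] unfolding lin_indep2_def q1_def p1_def q2_def p2_def .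
  have de: "q1 * xi \<alpha> (mink_w2 \<alpha> m) - q2 * xi \<alpha> (mink_w1 \<alpha> m) = of_int (q1 * p2 - p1 * q2)"
    unfolding q1_def p1_def q2_def p2_def xi_def by (simp add: algebra_simps)
  have "1 \<le> \<bar>real_of_int (q1 * p2 - p1 * q2)\<bar>" using d by linarith
  also have "\<dots> \<le> \<bar>q1 * xi \<alpha> (mink_w2 \<alpha> m)\<bar> + \<bar>q2 * xi \<alpha> (mink_w1 \<alpha> m)\<bar>"
    using de[symmetric] by (metis abs_triangle_ineq4)
  also have "\<dots> = q1 * X + \<bar>q2\<bar> * e1" using q1 unfolding X_def e1_def by (simp add: abs_mult)
  finally have k0: "1 \<le> q1 * X + \<bar>q2\<bar> * e1" .
  have "\<bar>real_of_int q2\<bar> * e1 \<le> real m * e1" using q2 e1 by (intro mult_right_mono) auto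
  then have k: "1 - real m * e1 \<le> q1 * X" using k0 by simp
  have pos: "0 < 1 - real m * e1" using small unfolding e1_def by simp
  have Xp: "0 < q1 * X" using k pos by linarith
  have "e1 / X = (e1 * q1) / (q1 * X)" using q1 by simp
  also have "\<dots> \<le> (e1 * q1) / (1 - real m * e1)"
    using k pos e1 q1 by (intro frac_le) auto
  also have "\<dots> \<le> (real m * e1) / (1 - real m * e1)"
    using pos e1 q1 by (intro divide_right_mono) (auto simp: mult.commute)
  finally show ?thesis unfolding e1_def X_def by (simp add: abs_divide)
qed

lemma ratio_lower:
  assumes m: "m \<ge> 1" and c: "c > 0" and cb: "\<forall>q::int. \<forall>p::int. q \<ge> (1::int) \<longrightarrow> c \<le> q * \<bar>q * \<alpha> + p\<bar>"
  shows "c / 2 \<le> \<bar>xi \<alpha> (mink_w1 \<alpha> m) / xi \<alpha> (mink_w2 \<alpha> m)\<bar>"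
proof -
  define q1 where "q1 = fst (mink_w1 \<alpha> m)"
  define p1 where "p1 = snd (mink_w1 \<alpha> m)"
  define e1 where "e1 = \<bar>xi \<alpha> (mink_w1 \<alpha> m)\<bar>"
  define X where "X = \<bar>xi \<alpha> (mink_w2 \<alpha> m)\<bar>"
  have q1: "1 \<le> q1" "q1 \<le> int m" using w1_facts[OF m] unfolding q1_def by auto
  have xe: "xi \<alpha> (mink_w1 \<alpha> m) = q1 * \<alpha> + p1" using w1_facts(5)[OF m] unfolding q1_def p1_def .
  have e1: "0 < e1" using w1_facts(4)[OF m] unfolding e1_def .
  have e1s: "e1 \<le> 1 / (real m + 1)" using w1_small[OF m] unfolding e1_def .
  have gc: "gcd q1 p1 = 1" using w1_facts(6)[OF m] unfolding q1_def p1_def .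
  have ce: "c \<le> q1 * e1" using cb q1(1) xe unfolding e1_def by simp
  have Xp: "0 < X" unfolding X_def using xi_nz lin_indep_nz[OF w2_facts(2)[OF m]] by simp
  have X2: "X * q1 \<le> 2"
  proof (cases "q1 = 1")
    case True
    have "X \<le> \<bar>xi \<alpha> (0, 1)\<bar>" unfolding X_def using indep_exists[OF m] w2_facts(3)[OF m] by blast
    then show ?thesis using True by (simp add: xi_def)
  next
    case False
    then have q12: "q1 \<ge> 2" using q1 by simp
    obtain x y where xy: "x * q1 + y * p1 = 1" using bezout_int[of q1 p1] gc by auto
    define a where "a = (int m + y) div q1"
    define r where "r = (int m + y) mod q1"
    have ar: "int m + y = q1 * a + r" unfolding a_def r_def by simp
    have r: "0 \<le> r" "r < q1" unfolding r_def using q1 by simp_all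
    define qv where "qv = - y + a * q1"
    define pv where "pv = x + a * p1"
    define v where "v = (qv, pv)"
    have qv: "qv = int m - r" unfolding qv_def using ar by (simp add: algebra_simps)
    have qv1: "1 \<le> qv" "qv \<le> int m" using qv r q1 by linarith+
    have det: "q1 * pv - p1 * qv = 1" unfolding pv_def qv_def using xy by (simp add: algebra_simps)
    have xv: "q1 * xi \<alpha> v - qv * xi \<alpha> (mink_w1 \<alpha> m) = 1"
    proof -
      have "q1 * xi \<alpha> v - qv * xi \<alpha> (mink_w1 \<alpha> m) = of_int (q1 * pv - p1 * qv)"
        unfolding v_def xe xi_def by (simp add: algebra_simps q1_def p1_def)
      then show ?thesis using det by simp
    qed
    have "q1 * \<bar>xi \<alpha> v\<bar> \<le> 1 + qv * e1"
    proof -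
      have "q1 * xi \<alpha> v = 1 + qv * xi \<alpha> (mink_w1 \<alpha> m)" using xv by simp
      then have "\<bar>q1 * xi \<alpha> v\<bar> \<le> 1 + \<bar>qv * xi \<alpha> (mink_w1 \<alpha> m)\<bar>" by simp
      then show ?thesis using q1 qv1 unfolding e1_def by (simp add: abs_mult)
    qed
    also have "qv * e1 \<le> real m * e1" using qv1 e1 by (intro mult_right_mono) auto
    also have "real m * e1 < 1"
    proof -
      have "real m * e1 \<le> real m * (1 / (real m + 1))" using e1s by (intro mult_left_mono) auto
      also have "\<dots> < 1" by (simp add: divide_less_eq)
      finally show ?thesis .
    qed
    finally have v2: "q1 * \<bar>xi \<alpha> v\<bar> < 2" by simp
    have v1: "\<bar>xi \<alpha> v\<bar> < 1"
    proof -
      have "2 * \<bar>xi \<alpha> v\<bar> \<le> q1 * \<bar>xi \<alpha> v\<bar>" using q12 by (intro mult_right_mono) auto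
      then show ?thesis using v2 by linarith
    qed
    have "v \<in> box m"
    proof -
      have xvd: "xi \<alpha> v = qv * \<alpha> + pv" unfolding v_def xi_def by simp
      have "0 < qv * \<alpha>" "qv * \<alpha> < qv" using qv1 a0 a1 by simp_all
      then have "real_of_int pv > - real_of_int qv - 1" "real_of_int pv < 1"
        using v1 xvd by (auto simp: abs_less_iff)
      then have "pv \<ge> - qv" "pv \<le> 0" by linarith+
      then show ?thesis unfolding v_def box_def using qv1 by simp
    qed
    moreover have "lin_indep2 (mink_w1 \<alpha> m) v" unfolding lin_indep2_def v_def
      using det unfolding q1_def p1_def by simp
    ultimately have "X \<le> \<bar>xi \<alpha> v\<bar>" unfolding X_def by (rule w2_facts(3)[OF m])
    then have "X * q1 \<le> \<bar>xi \<alpha> v\<bar> * q1" using q1 by (intro mult_right_mono) auto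
    then show ?thesis using v2 by (simp add: mult.commute)
  qed
  have "c / 2 * X * q1 \<le> c" using X2 c by (simp add: mult.assoc mult_left_le[of "X*q1" 2] divide_le_eq)
  also have "c \<le> q1 * e1" by (rule ce)
  finally have "c / 2 * X \<le> e1" using q1 by (simp add: mult.commute)
  then have "c / 2 \<le> e1 / X" using Xp by (simp add: le_divide_eq)
  then show ?thesis unfolding e1_def X_def by (simp add: abs_divide)
qed

lemma chain_rep:
  assumes m: "m \<ge> 1"
  shows "\<exists>j\<in>chain_idx \<alpha>. mink_A \<alpha> j = mink_A \<alpha> m"
proof -
  define P where "P = (\<lambda>j. 1 \<le> j \<and> mink_A \<alpha> j = mink_A \<alpha> m)"
  have Pm: "P m" using m unfolding P_def by simp
  define j where "j = (LEAST j. P j)"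
  have Pj: "P j" unfolding j_def using Pm by (rule LeastI)
  have "\<forall>i\<in>{1..<j}. mink_A \<alpha> i \<noteq> mink_A \<alpha> j"
  proof
    fix i assume i: "i \<in> {1..<j}"
    show "mink_A \<alpha> i \<noteq> mink_A \<alpha> j"
    proof
      assume "mink_A \<alpha> i = mink_A \<alpha> j"
      then have "P i" using Pj i unfolding P_def by simp
      then have "j \<le> i" unfolding j_def by (rule Least_le)
      then show False using i by simp
    qed
  qed
  then have "j \<in> chain_idx \<alpha>" using Pj unfolding chain_idx_def P_def by simp
  then show ?thesis using Pj unfolding P_def by blast
qed

lemma chain_inf: "infinite (chain_idx \<alpha>)"
proof
  assume fin: "finite (chain_idx \<alpha>)"
  define F where "F = (\<lambda>j. \<bar>xi \<alpha> (mink_w1 \<alpha> j)\<bar>) ` chain_idx \<alpha>"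
  have "1 \<in> chain_idx \<alpha>" unfolding chain_idx_def by simp
  then have ne: "F \<noteq> {}" unfolding F_def by blast
  have finF: "finite F" unfolding F_def using fin by simp
  have Fpos: "\<forall>x\<in>F. 0 < x" unfolding F_def chain_idx_def using w1_facts(4) by auto
  define \<mu> where "\<mu> = Min F"
  have \<mu>: "0 < \<mu>" unfolding \<mu>_def using finF ne Fpos by simp
  define m where "m = nat \<lceil>1 / \<mu>\<rceil> + 1"
  have m1: "m \<ge> 1" unfolding m_def by simp
  have "1 / \<mu> < real m + 1" unfolding m_def by linarith
  then have "1 / (real m + 1) < \<mu>" using \<mu> by (simp add: divide_less_eq mult.commute)
  then have sm: "\<bar>xi \<alpha> (mink_w1 \<alpha> m)\<bar> < \<mu>" using w1_small[OF m1] by linarith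
  obtain j where j: "j \<in> chain_idx \<alpha>" "mink_A \<alpha> j = mink_A \<alpha> m" using chain_rep[OF m1] by blast
  have "mink_w1 \<alpha> j = mink_w1 \<alpha> m" using j(2) unfolding mink_A_def by simp
  then have "\<bar>xi \<alpha> (mink_w1 \<alpha> m)\<bar> \<in> F" unfolding F_def using j(1) by (metis image_eqI)
  then have "\<mu> \<le> \<bar>xi \<alpha> (mink_w1 \<alpha> m)\<bar>" unfolding \<mu>_def using finF by simp
  then show False using sm by simp
qed

lemma B_is_A:
  assumes "k \<ge> 1"
  shows "\<exists>m\<ge>1. mink_B \<alpha> k = mink_A \<alpha> m"
proof -
  have "enumerate (chain_idx \<alpha>) (k - 1) \<in> chain_idx \<alpha>" by (rule enumerate_in_set[OF chain_inf])
  then show ?thesis unfolding mink_B_def chain_idx_def by auto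
qed

lemma A_is_B:
  assumes m: "m \<ge> 1"
  shows "\<exists>k\<ge>1. mink_B \<alpha> k = mink_A \<alpha> m"
proof -
  obtain j where j: "j \<in> chain_idx \<alpha>" "mink_A \<alpha> j = mink_A \<alpha> m" using chain_rep[OF m] by blast
  obtain n where "enumerate (chain_idx \<alpha>) n = j" using enumerate_Ex[OF chain_inf j(1)] by blast
  then have "mink_B \<alpha> (Suc n) = mink_A \<alpha> m" unfolding mink_B_def using j(2) by simp
  then show ?thesis by (intro exI[of _ "Suc n"]) simp
qed

lemma alpha_k1_A:
  "mink_B \<alpha> k = mink_A \<alpha> m \<Longrightarrow> alpha_k1 \<alpha> k = xi \<alpha> (mink_w1 \<alpha> m) / xi \<alpha> (mink_w2 \<alpha> m)"
  unfolding alpha_k1_def mink_A_def by simp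

lemma dir1:
  assumes "\<exists>C. \<forall>j \<ge> 1. \<bar>cf_quot \<alpha> j\<bar> \<le> C"
  shows "\<exists>\<delta> > 0. \<forall>k \<ge> 1. \<bar>alpha_k1 \<alpha> k\<bar> \<ge> \<delta>"
proof -
  obtain C where C: "\<forall>j \<ge> 1. \<bar>cf_quot \<alpha> j\<bar> \<le> C" using assms by blast
  obtain c where c: "c > 0" "\<forall>q::int. \<forall>p::int. q \<ge> (1::int) \<longrightarrow> c \<le> q * \<bar>q * \<alpha> + p\<bar>"
    using badly[OF C] by blast
  have "\<bar>alpha_k1 \<alpha> k\<bar> \<ge> c / 2" if k: "k \<ge> 1" for k
  proof -
    obtain m where m: "m \<ge> 1" "mink_B \<alpha> k = mink_A \<alpha> m" using B_is_A[OF k] by blast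
    show ?thesis using ratio_lower[OF m(1) c] alpha_k1_A[OF m(2)] by simp
  qed
  then show ?thesis using c(1) by (intro exI[of _ "c/2"]) auto
qed

lemma dir2:
  assumes d: "\<delta> > 0" and dk: "\<forall>k \<ge> 1. \<bar>alpha_k1 \<alpha> k\<bar> \<ge> \<delta>"
  shows "\<exists>C. \<forall>j \<ge> 1. \<bar>cf_quot \<alpha> j\<bar> \<le> C"
proof (rule ccontr)
  assume nb: "\<not> ?thesis"
  define \<eta> where "\<eta> = min (1/2) (\<delta> / 4)"
  have \<eta>: "0 < \<eta>" "\<eta> \<le> 1/2" "\<eta> \<le> \<delta> / 4" unfolding \<eta>_def using d by auto
  obtain j where j: "j \<ge> 1" "\<bar>cf_quot \<alpha> j\<bar> > \<lceil>1 / \<eta>\<rceil>" using nb by (meson not_le)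
  have aj: "cf_quot \<alpha> j \<ge> 1" using quot_ge1[of "j - 1"] j(1) by simp
  have aj2: "real_of_int (cf_quot \<alpha> j) > 1 / \<eta>" using j(2) aj by linarith
  have nbj: "cf_quot \<alpha> j * (qq \<alpha> j * PP \<alpha> j) \<le> 1" by (rule not_badly[OF j(1)])
  have Q1: "qq \<alpha> j \<ge> 1" using qq_nonneg[of "j - 1"] j(1) by (cases j) auto
  have qP: "qq \<alpha> j * PP \<alpha> j < \<eta>"
  proof -
    have pos: "0 < qq \<alpha> j * PP \<alpha> j" using Q1 PP_pos[of j] by simp
    have "(1 / \<eta>) * (qq \<alpha> j * PP \<alpha> j) < cf_quot \<alpha> j * (qq \<alpha> j * PP \<alpha> j)"
      using aj2 pos by (intro mult_strict_right_mono) auto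
    then have "(1 / \<eta>) * (qq \<alpha> j * PP \<alpha> j) < 1" using nbj by linarith
    then show ?thesis using \<eta>(1) by (simp add: field_simps)
  qed
  define m where "m = nat (qq \<alpha> j)"
  have m: "m \<ge> 1" "int m = qq \<alpha> j" unfolding m_def using Q1 by simp_all
  have pb: "0 \<le> pp \<alpha> j" "pp \<alpha> j \<le> qq \<alpha> j" using pp_bounds[OF j(1)] by auto
  have inb: "(qq \<alpha> j, - pp \<alpha> j) \<in> box m" unfolding box_def using m pb by simp
  have nz: "(qq \<alpha> j, - pp \<alpha> j) \<noteq> (0,0)" using Q1 by simp
  have xe: "\<bar>xi \<alpha> (qq \<alpha> j, - pp \<alpha> j)\<bar> = PP \<alpha> j"
    using abs_xi[of j] unfolding xi_def by (simp add: algebra_simps)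
  have sp4: "\<forall>v \<in> box m. v \<noteq> (0, 0) \<longrightarrow> \<bar>xi \<alpha> (mink_w1 \<alpha> m)\<bar> \<le> \<bar>xi \<alpha> v\<bar>"
    using w1_spec[OF m(1)] by (rule conjunct2[OF conjunct2[OF conjunct2]])
  have e1: "\<bar>xi \<alpha> (mink_w1 \<alpha> m)\<bar> \<le> PP \<alpha> j" using sp4 inb nz xe by metis
  define E where "E = real m * \<bar>xi \<alpha> (mink_w1 \<alpha> m)\<bar>"
  have E0: "0 \<le> E" unfolding E_def by simp
  have "E \<le> qq \<alpha> j * PP \<alpha> j" unfolding E_def using e1 m(2)
    by (metis mult_left_mono of_int_of_nat_eq of_nat_0_le_iff)
  then have E: "E < \<eta>" using qP by linarith
  have r: "\<bar>xi \<alpha> (mink_w1 \<alpha> m) / xi \<alpha> (mink_w2 \<alpha> m)\<bar> \<le> E / (1 - E)"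
    unfolding E_def by (rule ratio_upper[OF m(1)]) (use E \<eta> E_def in simp)
  have h: "E * (E * 2) \<le> E" using mult_left_mono[of "E * 2" 1 E] E \<eta> E0 by simp
  have "E / (1 - E) \<le> 2 * E" using E \<eta> E0 h by (simp add: divide_le_eq algebra_simps)
  then have "\<bar>xi \<alpha> (mink_w1 \<alpha> m) / xi \<alpha> (mink_w2 \<alpha> m)\<bar> < \<delta>" using r E \<eta> by linarith
  moreover obtain k where k: "k \<ge> 1" "mink_B \<alpha> k = mink_A \<alpha> m" using A_is_B[OF m(1)] by blast
  ultimately have "\<bar>alpha_k1 \<alpha> k\<bar> < \<delta>" using alpha_k1_A[OF k(2)] by simp
  then show False using dk k(1) by force
qed

end

theorem lemma4p2:
  fixes \<alpha> :: real
  assumes "0 < \<alpha>" and "\<alpha> < 1" and "\<alpha> \<notin> \<rat>"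
  shows "(\<exists>C. \<forall>j \<ge> 1. \<bar>cf_quot \<alpha> j\<bar> \<le> C) \<longleftrightarrow>
         (\<exists>\<delta> > 0. \<forall>k \<ge> 1. \<bar>alpha_k1 \<alpha> k\<bar> \<ge> \<delta>)"
  using dir1[OF assms] dir2[OF assms] by blast

end
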